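(* Let $T$ be a tree rooted at a vertex $v$ such that every vertex $u\in V(T)\setminus\{v\}$ satisfies $d_T(u)\le 2$. Then (a) $v\in\mathcal{A}(T)$ if and only if $|C^2(v)|=0$ and $|C^1(v)|\le 1$; (b) $v\in\mathcal{N}(T)$ if and only if $|C^2(v)|=2$ or $|C^1(v)|+|C^2(v)|\ge 3$.
   Context: All graphs are finite, simple and undirected. A dissociation set of a graph $G$ is a set $F\subseteq V(G)$ such that $G[F]$ has maximum degree at most $1$; a maximum dissociation set is one of maximum cardinality. $\mathcal{A}(G)$ is the set of vertices of $G$ contained in every maximum dissociation set of $G$, and $\mathcal{N}(G)$ is the set of vertices of $G$ contained in no maximum dissociation set of $G$. In a tree $T$ rooted at $v$, $C(v)$ denotes the set of children of $v$, and for a vertex $w$, $T_w$ denotes the subtree induced by $w$ and all its descendants. Under the hypothesis that all non-root vertices have degree at most $2$, for each child $w$ of $v$ the subtree $T_w$ is a path having $w$ as an end vertex. For $i\in\{0,1,2\}$, $C^i(v)$ denotes the set of children $w\in C(v)$ such that the number of vertices of the path $T_w$ is congruent to $i$ modulo $3$. *)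

theory Defs
  imports Main
begin

definition simple_graph :: "'a set \<Rightarrow> ('a \<Rightarrow> 'a \<Rightarrow> bool) \<Rightarrow> bool" where
  "simple_graph V E \<longleftrightarrow> finite V \<and> (\<forall>u w. E u w \<longrightarrow> u \<in> V \<and> w \<in> V)
     \<and> (\<forall>u w. E u w \<longrightarrow> E w u) \<and> (\<forall>u. \<not> E u u)"

definition degree :: "'a set \<Rightarrow> ('a \<Rightarrow> 'a \<Rightarrow> bool) \<Rightarrow> 'a \<Rightarrow> nat" where
  "degree V E u = card {w \<in> V. E u w}"

definition reach_in :: "'a set \<Rightarrow> ('a \<Rightarrow> 'a \<Rightarrow> bool) \<Rightarrow> 'a \<Rightarrow> 'a \<Rightarrow> bool" where
  "reach_in S E = (\<lambda>x y. x \<in> S \<and> y \<in> S \<and> E x y)\<^sup>*\<^sup>*"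

definition connected_graph :: "'a set \<Rightarrow> ('a \<Rightarrow> 'a \<Rightarrow> bool) \<Rightarrow> bool" where
  "connected_graph V E \<longleftrightarrow> V \<noteq> {} \<and> (\<forall>x\<in>V. \<forall>y\<in>V. reach_in V E x y)"

definition is_cycle :: "'a set \<Rightarrow> ('a \<Rightarrow> 'a \<Rightarrow> bool) \<Rightarrow> 'a list \<Rightarrow> bool" where
  "is_cycle V E cs \<longleftrightarrow> length cs \<ge> 3 \<and> distinct cs \<and> set cs \<subseteq> V
     \<and> (\<forall>i. Suc i < length cs \<longrightarrow> E (cs ! i) (cs ! Suc i)) \<and> E (last cs) (hd cs)"

definition is_tree :: "'a set \<Rightarrow> ('a \<Rightarrow> 'a \<Rightarrow> bool) \<Rightarrow> bool" where
  "is_tree V E \<longleftrightarrow> simple_graph V E \<and> connected_graph V E \<and> (\<nexists>cs. is_cycle V E cs)"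

definition dissociation_set :: "'a set \<Rightarrow> ('a \<Rightarrow> 'a \<Rightarrow> bool) \<Rightarrow> 'a set \<Rightarrow> bool" where
  "dissociation_set V E F \<longleftrightarrow> F \<subseteq> V \<and> (\<forall>x\<in>F. card {y \<in> F. E x y} \<le> 1)"

definition max_dissociation_set :: "'a set \<Rightarrow> ('a \<Rightarrow> 'a \<Rightarrow> bool) \<Rightarrow> 'a set \<Rightarrow> bool" where
  "max_dissociation_set V E F \<longleftrightarrow> dissociation_set V E F
     \<and> (\<forall>F'. dissociation_set V E F' \<longrightarrow> card F' \<le> card F)"

definition diss_A :: "'a set \<Rightarrow> ('a \<Rightarrow> 'a \<Rightarrow> bool) \<Rightarrow> 'a set" where
  "diss_A V E = {x \<in> V. \<forall>F. max_dissociation_set V E F \<longrightarrow> x \<in> F}"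

definition diss_N :: "'a set \<Rightarrow> ('a \<Rightarrow> 'a \<Rightarrow> bool) \<Rightarrow> 'a set" where
  "diss_N V E = {x \<in> V. \<forall>F. max_dissociation_set V E F \<longrightarrow> x \<notin> F}"

text \<open>Rooted at v: the children of v are its neighbours; for a child w, T_w consists of the
  vertices reachable from w in T - v (i.e. w and its descendants).\<close>
definition children :: "'a set \<Rightarrow> ('a \<Rightarrow> 'a \<Rightarrow> bool) \<Rightarrow> 'a \<Rightarrow> 'a set" where
  "children V E v = {w \<in> V. E v w}"

definition subtree_child :: "'a set \<Rightarrow> ('a \<Rightarrow> 'a \<Rightarrow> bool) \<Rightarrow> 'a \<Rightarrow> 'a \<Rightarrow> 'a set" where
  "subtree_child V E v w = {u \<in> V - {v}. reach_in (V - {v}) E w u}"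

definition children_mod :: "'a set \<Rightarrow> ('a \<Rightarrow> 'a \<Rightarrow> bool) \<Rightarrow> 'a \<Rightarrow> nat \<Rightarrow> 'a set" where
  "children_mod V E v i = {w \<in> children V E v. card (subtree_child V E v w) mod 3 = i}"

end

theory Submission
  imports Defs "HOL-Library.Transitive_Closure_Table"
begin


fun fd :: "nat \<Rightarrow> nat" where
 "fd 0 = 0" | "fd (Suc 0) = 1" | "fd (Suc (Suc 0)) = 2" | "fd (Suc (Suc (Suc n))) = 2 + fd n"

lemma M3[simp]: "Suc (Suc (Suc n)) mod 3 = n mod 3"
proof -
  have "Suc (Suc (Suc n)) = n + 3" by simp
  then show ?thesis by (simp only: mod_add_self2)
qed

lemma M4[simp]: "(3 + n) mod 3 = n mod (3::nat)" "(4 + n) mod 3 = Suc n mod (3::nat)" "(5 + n) mod 3 = Suc (Suc n) mod (3::nat)"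
  by presburger+

lemma fdA: "fd n \<le> fd (Suc n)"
  by (induction n rule: fd.induct) auto
lemma fdB: "1 + fd n \<le> fd (Suc (Suc n))"
  by (induction n rule: fd.induct) auto

lemma fd_ar1: "m \<ge> 1 \<Longrightarrow> fd m \<le> fd (Suc m) \<and> 1 + fd (m-1) \<le> fd (Suc m) \<and> 2 + fd (m - 2) \<le> fd (Suc m)"
  using fdA[of m] fdB[of "m - 1"]
  apply (cases m; simp)
  subgoal for k by (cases k; simp; case_tac nat; simp)
  done

lemma fd_ar2: "m \<ge> 1 \<Longrightarrow> fd (Suc m) = 2 + fd (m - 2)"
  by (cases m; simp; case_tac nat; simp; case_tac nata; simp)

lemma ar_b0: "fd k + (if Suc k mod 3 \<noteq> 0 then 1 else 0) = fd (Suc k)"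
  by (induction k rule: fd.induct) auto
lemma ar_b: "n \<ge> 1 \<Longrightarrow> fd (n-1) + (if n mod 3 \<noteq> 0 then 1 else 0) = fd n"
  using ar_b0[of "n - 1"] by (cases n) auto

lemma ar_c0: "1 + fd k + (if Suc (Suc k) mod 3 \<noteq> 0 then 1 else 0) = fd (Suc (Suc k)) + (if Suc (Suc k) mod 3 = 1 then 1 else 0)"
  by (induction k rule: fd.induct) auto
lemma ar_c: "n \<ge> 1 \<Longrightarrow> 1 + fd (n-2) + (if n mod 3 \<noteq> 0 then 1 else 0) = fd n + (if n mod 3 = 1 then 1 else 0)"
  using ar_c0[of "n - 2"] by (cases n; simp; case_tac nat; simp split: if_splits)
definition dss :: "('a \<Rightarrow> 'a \<Rightarrow> bool) \<Rightarrow> 'a set \<Rightarrow> bool" where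
  "dss E S \<longleftrightarrow> finite S \<and> (\<forall>x\<in>S. card {y\<in>S. E x y} \<le> 1)"

lemma dss_subset: "dss E S \<Longrightarrow> T \<subseteq> S \<Longrightarrow> dss E T"
  unfolding dss_def
proof (intro conjI ballI)
  fix x assume a: "finite S \<and> (\<forall>x\<in>S. card {y \<in> S. E x y} \<le> 1)" "T \<subseteq> S" "x \<in> T"
  then have "card {y \<in> T. E x y} \<le> card {y \<in> S. E x y}" by (intro card_mono) auto
  with a show "card {y \<in> T. E x y} \<le> 1" by force
qed (auto intro: finite_subset)

lemma card_sub1: "A \<subseteq> {a} \<Longrightarrow> card A \<le> 1"
  using card_mono[of "{a}" A] by simp

lemma reach_leaf:
  assumes r: "reach_in K E w x" and nb: "\<forall>y\<in>K. E w y \<longrightarrow> y = w'" and w': "w' \<in> K - {w}"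
  shows "x \<noteq> w \<longrightarrow> reach_in (K - {w}) E w' x"
  using r unfolding reach_in_def
proof (induction rule: rtranclp_induct)
  case base then show ?case by simp
next
  case (step y z)
  show ?case
  proof
    assume "z \<noteq> w"
    show "(\<lambda>x y. x \<in> K - {w} \<and> y \<in> K - {w} \<and> E x y)\<^sup>*\<^sup>* w' z"
    proof (cases "y = w")
      case True
      with step nb have "z = w'" by auto
      then show ?thesis by simp
    next
      case False
      have IH: "(\<lambda>x y. x \<in> K - {w} \<and> y \<in> K - {w} \<and> E x y)\<^sup>*\<^sup>* w' y" using step.IH False by blast
      have "y \<in> K - {w}" "z \<in> K - {w}" "E y z" using step.hyps(2) False \<open>z \<noteq> w\<close> by auto
      then show ?thesis using rtranclp.rtrancl_into_rtrancl[OF IH] by blast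
    qed
  qed
qed

lemma dss_insert_iso:
  assumes sym: "\<forall>x y. E x y \<longrightarrow> E y x" and irr: "\<forall>x. \<not> E x x"
    and d: "dss E S" and nb: "\<forall>y\<in>S. \<not> E x y"
  shows "dss E (insert x S)"
  unfolding dss_def
proof (intro conjI ballI)
  show "finite (insert x S)" using d by (simp add: dss_def)
  fix z assume z: "z \<in> insert x S"
  show "card {y \<in> insert x S. E z y} \<le> 1"
  proof (cases "z = x")
    case True
    then have e: "{y \<in> insert x S. E z y} = {}" using nb irr by auto
    show ?thesis by (simp only: e) simp
  next
    case False
    then have "z \<in> S" using z by auto
    moreover have "{y \<in> insert x S. E z y} = {y \<in> S. E z y}" using nb sym \<open>z \<in> S\<close> by auto
    ultimately show ?thesis using d by (simp add: dss_def)
  qed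
qed

lemma dss_insert_pair:
  assumes sym: "\<forall>x y. E x y \<longrightarrow> E y x" and irr: "\<forall>x. \<not> E x x"
    and d: "dss E S" and a: "a \<in> S" and nbx: "\<forall>y\<in>S. E x y \<longrightarrow> y = a"
    and nba: "\<forall>y\<in>S. \<not> E a y"
  shows "dss E (insert x S)"
  unfolding dss_def
proof (intro conjI ballI)
  show "finite (insert x S)" using d by (simp add: dss_def)
  fix z assume z: "z \<in> insert x S"
  show "card {y \<in> insert x S. E z y} \<le> 1"
  proof (cases "z = x")
    case True
    then have "{y \<in> insert x S. E z y} \<subseteq> {a}" using nbx irr by auto
    then show ?thesis by (rule card_sub1)
  next
    case False
    then have zS: "z \<in> S" using z by auto
    show ?thesis
    proof (cases "z = a")
      case True
      then have "{y \<in> insert x S. E z y} \<subseteq> {x}" using nba by auto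
      then show ?thesis by (rule card_sub1)
    next
      case False
      have "{y \<in> insert x S. E z y} = {y \<in> S. E z y}" using nbx sym zS False by auto
      then show ?thesis using d zS by (simp add: dss_def)
    qed
  qed
qed

definition legP :: "('a \<Rightarrow> 'a \<Rightarrow> bool) \<Rightarrow> 'a set \<Rightarrow> 'a \<Rightarrow> nat \<Rightarrow> bool" where
 "legP E K w n \<longleftrightarrow>
 (\<forall>S. S \<subseteq> K \<longrightarrow> dss E S \<longrightarrow> card S \<le> fd n) \<and>
 (\<forall>S. S \<subseteq> K \<longrightarrow> dss E S \<longrightarrow> w \<notin> S \<longrightarrow> card S \<le> fd (n-1)) \<and>
 (\<forall>S. S \<subseteq> K \<longrightarrow> dss E S \<longrightarrow> w \<in> S \<longrightarrow> (\<forall>y\<in>S. \<not> E w y) \<longrightarrow> card S \<le> 1 + fd (n-2)) \<and>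
 (\<exists>S. S \<subseteq> K \<and> dss E S \<and> card S = fd n) \<and>
 (\<exists>S. S \<subseteq> K \<and> dss E S \<and> w \<notin> S \<and> card S = fd (n-1)) \<and>
 (\<exists>S. S \<subseteq> K \<and> dss E S \<and> w \<in> S \<and> (\<forall>y\<in>S. \<not> E w y) \<and> card S = 1 + fd (n-2))"

lemma legP_base: assumes irr: "\<forall>x. \<not> E x x" shows "legP E {w} w 1"
proof -
    have e: "{y\<in>{w}. E w y} = {}" using irr by auto
    have dw: "dss E {w}" unfolding dss_def
    proof (intro conjI ballI)
      fix x assume "x \<in> {w}" then have "x = w" by simp
      have "{y \<in> {w}. E x y} \<subseteq> {w}" by auto
      then show "card {y \<in> {w}. E x y} \<le> 1" by (rule card_sub1)
    qed simp
    have d0: "dss E {}" unfolding dss_def by auto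
    have f1: "fd 1 = 1" "fd 0 = 0" by auto
    have c1: "\<And>S. S \<subseteq> {w} \<Longrightarrow> card S \<le> 1"
      by (rule card_sub1)
    have c0: "\<And>S. S \<subseteq> {w} \<Longrightarrow> w \<notin> S \<Longrightarrow> card S = 0"
    proof -
      fix S assume "S \<subseteq> {w}" "w \<notin> S" then have "S = {}" by blast
      then show "card S = 0" by simp
    qed
    have "(\<forall>S. S \<subseteq> {w} \<longrightarrow> dss E S \<longrightarrow> card S \<le> 1) \<and>
 (\<forall>S. S \<subseteq> {w} \<longrightarrow> dss E S \<longrightarrow> w \<notin> S \<longrightarrow> card S \<le> 0) \<and>
 (\<forall>S. S \<subseteq> {w} \<longrightarrow> dss E S \<longrightarrow> w \<in> S \<longrightarrow> (\<forall>y\<in>S. \<not> E w y) \<longrightarrow> card S \<le> 1 + 0) \<and>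
 (\<exists>S. S \<subseteq> {w} \<and> dss E S \<and> card S = 1) \<and>
 (\<exists>S. S \<subseteq> {w} \<and> dss E S \<and> w \<notin> S \<and> card S = 0) \<and>
 (\<exists>S. S \<subseteq> {w} \<and> dss E S \<and> w \<in> S \<and> (\<forall>y\<in>S. \<not> E w y) \<and> card S = 1 + 0)"
    proof (intro conjI)
      show "\<exists>S. S \<subseteq> {w} \<and> dss E S \<and> card S = 1" using dw by (intro exI[of _ "{w}"]) auto
      show "\<exists>S. S \<subseteq> {w} \<and> dss E S \<and> w \<notin> S \<and> card S = 0" using d0 by (intro exI[of _ "{}"]) auto
      show "\<exists>S. S \<subseteq> {w} \<and> dss E S \<and> w \<in> S \<and> (\<forall>y\<in>S. \<not> E w y) \<and> card S = 1 + 0"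
        using dw irr by (intro exI[of _ "{w}"]) auto
    qed (use c1 c0 in auto)
    then show ?thesis unfolding legP_def using f1 by simp
qed

lemma leg:
  assumes sym: "\<forall>x y. E x y \<longrightarrow> E y x" and irr: "\<forall>x. \<not> E x x"
  shows "finite K \<Longrightarrow> card K = n \<Longrightarrow> w \<in> K \<Longrightarrow> (\<forall>x\<in>K. reach_in K E w x)
    \<Longrightarrow> (\<forall>u\<in>K. card {y\<in>K. E u y} \<le> 2) \<Longrightarrow> card {y\<in>K. E w y} \<le> 1 \<Longrightarrow> legP E K w n"
proof (induction n arbitrary: K w)
  case 0
  then show ?case by auto
next
  case (Suc m)
  show ?case
  proof (cases "m = 0")
    case True
    with Suc have "card K = 1" by simp
    then obtain a where "K = {a}" by (rule card_1_singletonE)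
    then have K: "K = {w}" using Suc by simp
    show ?thesis using legP_base[of E w, OF irr] K True by simp
  next
    case False
    then have m1: "m \<ge> 1" by simp
    have fin: "finite K" using Suc by simp
    have "card (K - {w}) = m" using Suc by simp
    then have "K - {w} \<noteq> {}" using False by (metis card.empty)
    then obtain x where x: "x \<in> K" "x \<noteq> w" by blast
    have "reach_in K E w x" using Suc x by simp
    then have "(\<lambda>a b. a \<in> K \<and> b \<in> K \<and> E a b)\<^sup>*\<^sup>* w x" unfolding reach_in_def .
    then obtain w' where w': "w' \<in> K" "E w w'"
    proof (cases rule: converse_rtranclpE)
      case base then show ?thesis using x by simp
    next
      case (step y) then show ?thesis using that by blast
    qed
    have ww': "w' \<noteq> w" using w' irr by auto
    have nb: "\<forall>y\<in>K. E w y \<longrightarrow> y = w'"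
    proof (intro ballI impI)
      fix y assume "y \<in> K" "E w y"
      then show "y = w'" using Suc(7) w' fin card_le_Suc0_iff_eq[of "{y\<in>K. E w y}"] by auto
    qed
    define K' where "K' = K - {w}"
    have finK': "finite K'" using fin K'_def by simp
    have cK': "card K' = m" using Suc K'_def by simp
    have w'K': "w' \<in> K'" using w' ww' K'_def by simp
    have reachK': "\<forall>x\<in>K'. reach_in K' E w' x"
      using reach_leaf[of K E w _ w'] Suc(5) nb w'K' unfolding K'_def by auto
    have degK': "\<forall>u\<in>K'. card {y\<in>K'. E u y} \<le> 2"
    proof
      fix u assume "u \<in> K'"
      then have "card {y\<in>K'. E u y} \<le> card {y\<in>K. E u y}"
        using fin K'_def by (intro card_mono) auto
      then show "card {y\<in>K'. E u y} \<le> 2" using Suc(6) \<open>u \<in> K'\<close> K'_def by force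
    qed
    have degw': "card {y\<in>K'. E w' y} \<le> 1"
    proof -
      have eq: "{y\<in>K'. E w' y} = {y\<in>K. E w' y} - {w}" using K'_def by auto
      have "w \<in> {y\<in>K. E w' y}" using sym w' Suc by auto
      then have "card {y\<in>K'. E w' y} = card {y\<in>K. E w' y} - 1" using eq fin by simp
      then show ?thesis using Suc(6) w' by force
    qed
    have IH: "legP E K' w' m" using Suc.IH[OF finK' cK' w'K' reachK' degK' degw'] .
    note IH = IH[unfolded legP_def]
    have UA0: "\<forall>S. S \<subseteq> K' \<longrightarrow> dss E S \<longrightarrow> card S \<le> fd m" using IH by (elim conjE) assumption
    have UB0: "\<forall>S. S \<subseteq> K' \<longrightarrow> dss E S \<longrightarrow> w' \<notin> S \<longrightarrow> card S \<le> fd (m-1)" using IH by (elim conjE) assumption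
    have UC0: "\<forall>S. S \<subseteq> K' \<longrightarrow> dss E S \<longrightarrow> w' \<in> S \<longrightarrow> (\<forall>y\<in>S. \<not> E w' y) \<longrightarrow> card S \<le> 1 + fd (m-2)" using IH by (elim conjE) assumption
    have WA0: "\<exists>S. S \<subseteq> K' \<and> dss E S \<and> card S = fd m" using IH by (elim conjE) assumption
    have WB0: "\<exists>S. S \<subseteq> K' \<and> dss E S \<and> w' \<notin> S \<and> card S = fd (m-1)" using IH by (elim conjE) assumption
    have WC0: "\<exists>S. S \<subseteq> K' \<and> dss E S \<and> w' \<in> S \<and> (\<forall>y\<in>S. \<not> E w' y) \<and> card S = 1 + fd (m-2)" using IH by (elim conjE) assumption
    have UA': "\<And>S. S \<subseteq> K' \<Longrightarrow> dss E S \<Longrightarrow> card S \<le> fd m" using UA0 by blast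
    have UB': "\<And>S. S \<subseteq> K' \<Longrightarrow> dss E S \<Longrightarrow> w' \<notin> S \<Longrightarrow> card S \<le> fd (m-1)" using UB0 by blast
    have UC': "\<And>S. S \<subseteq> K' \<Longrightarrow> dss E S \<Longrightarrow> w' \<in> S \<Longrightarrow> (\<forall>y\<in>S. \<not> E w' y) \<Longrightarrow> card S \<le> 1 + fd (m-2)" using UC0 by blast
    obtain SA where SA: "SA \<subseteq> K'" "dss E SA" "card SA = fd m" using WA0 by blast
    obtain SB where SB: "SB \<subseteq> K'" "dss E SB" "w' \<notin> SB" "card SB = fd (m-1)" using WB0 by blast
    obtain SC where SC: "SC \<subseteq> K'" "dss E SC" "w' \<in> SC" "\<forall>y\<in>SC. \<not> E w' y" "card SC = 1 + fd (m-2)" using WC0 by blast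
    have ar1: "fd m \<le> fd (Suc m)" "1 + fd (m-1) \<le> fd (Suc m)" "2 + fd (m - 2) \<le> fd (Suc m)"
      using fd_ar1[OF m1] by auto
    have s1: "Suc m - 1 = m" "Suc m - 2 = m - 1" by auto
    have rem: "\<And>S. S \<subseteq> K \<Longrightarrow> S - {w} \<subseteq> K'" using K'_def by auto
    have remw: "\<And>S. S \<subseteq> K \<Longrightarrow> w \<notin> S \<Longrightarrow> S \<subseteq> K'" using K'_def by auto
    have cardrem: "\<And>S. S \<subseteq> K \<Longrightarrow> w \<in> S \<Longrightarrow> card S = Suc (card (S - {w}))"
    proof -
      fix S assume "S \<subseteq> K" "w \<in> S"
      show "card S = Suc (card (S - {w}))" by (rule card.remove[OF finite_subset[OF \<open>S \<subseteq> K\<close> fin] \<open>w \<in> S\<close>])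
    qed
    have UA: "\<forall>S. S \<subseteq> K \<longrightarrow> dss E S \<longrightarrow> card S \<le> fd (Suc m)"
    proof (intro allI impI)
      fix S assume S: "S \<subseteq> K" "dss E S"
      have dS': "dss E (S - {w})" using S dss_subset by blast
      show "card S \<le> fd (Suc m)"
      proof (cases "w \<in> S")
        case False
        then show ?thesis using UA'[OF remw[OF S(1) False] S(2)] ar1 by simp
      next
        case wS: True
        show ?thesis
        proof (cases "w' \<in> S")
          case False
          then have "card (S - {w}) \<le> fd (m-1)" using UB'[OF rem[OF S(1)] dS'] by simp
          then show ?thesis using cardrem[OF S(1) wS] ar1 by simp
        next
          case True
          have "\<forall>y\<in>S - {w}. \<not> E w' y"
          proof
            fix y assume y: "y \<in> S - {w}"
            show "\<not> E w' y"
            proof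
              assume "E w' y"
              have fS: "finite S" using S(2) by (simp add: dss_def)
              have "card {z\<in>S. E w' z} \<le> 1" using S(2) True by (simp add: dss_def)
              moreover have "w \<in> {z\<in>S. E w' z}" using wS sym w' by auto
              moreover have "y \<in> {z\<in>S. E w' z}" using y \<open>E w' y\<close> by auto
              ultimately show False using y fS card_le_Suc0_iff_eq[of "{z\<in>S. E w' z}"] by auto
            qed
          qed
          then have "card (S - {w}) \<le> 1 + fd (m-2)" using UC'[OF rem[OF S(1)] dS'] True ww' by simp
          then show ?thesis using cardrem[OF S(1) wS] ar1 by simp
        qed
      qed
    qed
    have UB: "\<forall>S. S \<subseteq> K \<longrightarrow> dss E S \<longrightarrow> w \<notin> S \<longrightarrow> card S \<le> fd (Suc m - 1)"
      using UA' remw s1 by auto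
    have UC: "\<forall>S. S \<subseteq> K \<longrightarrow> dss E S \<longrightarrow> w \<in> S \<longrightarrow> (\<forall>y\<in>S. \<not> E w y) \<longrightarrow> card S \<le> 1 + fd (Suc m - 2)"
    proof (intro allI impI)
      fix S assume S: "S \<subseteq> K" "dss E S" "w \<in> S" "\<forall>y\<in>S. \<not> E w y"
      then have "w' \<notin> S" using w' by auto
      then have "card (S - {w}) \<le> fd (m-1)" using UB'[OF rem[OF S(1)]] S dss_subset[of E S "S - {w}"] by auto
      then show "card S \<le> 1 + fd (Suc m - 2)" using cardrem[OF S(1) S(3)] s1 by simp
    qed
    have WC: "\<exists>S. S \<subseteq> K \<and> dss E S \<and> w \<in> S \<and> (\<forall>y\<in>S. \<not> E w y) \<and> card S = 1 + fd (Suc m - 2)"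
    proof (intro exI conjI)
      show "insert w SB \<subseteq> K" using SB K'_def Suc by auto
      have nbS: "\<forall>y\<in>SB. \<not> E w y" using nb SB K'_def by auto
      show "dss E (insert w SB)" using dss_insert_iso[OF sym irr SB(2) nbS] .
      show "w \<in> insert w SB" by simp
      show "\<forall>y\<in>insert w SB. \<not> E w y" using nbS irr by auto
      have "w \<notin> SB" using SB K'_def by auto
      moreover have "finite SB" using SB(1) finK' finite_subset by blast
      ultimately show "card (insert w SB) = 1 + fd (Suc m - 2)" using SB(4) s1 by simp
    qed
    have WB: "\<exists>S. S \<subseteq> K \<and> dss E S \<and> w \<notin> S \<and> card S = fd (Suc m - 1)"
      using SA K'_def s1 by (intro exI[of _ SA]) auto
    have WA: "\<exists>S. S \<subseteq> K \<and> dss E S \<and> card S = fd (Suc m)"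
    proof -
      have 3: "fd (Suc m) = 2 + fd (m - 2)" using fd_ar2[OF m1] .
      show ?thesis
      proof -
        have nbx: "\<forall>y\<in>SC. E w y \<longrightarrow> y = w'" using nb SC K'_def by auto
        have d: "dss E (insert w SC)" using dss_insert_pair[OF sym irr SC(2) SC(3) nbx SC(4)] .
        have "w \<notin> SC" using SC K'_def by auto
        moreover have "finite SC" using SC(1) finK' finite_subset by blast
        ultimately have "card (insert w SC) = fd (Suc m)" using SC(5) 3 by simp
        then show ?thesis using d SC K'_def Suc by (intro exI[of _ "insert w SC"]) auto
      qed
    qed
    show ?thesis unfolding legP_def by (intro conjI UA UB UC WA WB WC)
  qed
qed

lemma reach_sym:
  assumes sym: "\<forall>x y. E x y \<longrightarrow> E y x" and r: "reach_in S E a b"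
  shows "reach_in S E b a"
  using r unfolding reach_in_def
proof (induction rule: rtranclp_induct)
  case base then show ?case by simp
next
  case (step y z)
  have "(\<lambda>x y. x \<in> S \<and> y \<in> S \<and> E x y) z y" using step.hyps(2) sym by blast
  then show ?case using step.IH by (rule converse_rtranclp_into_rtranclp)
qed

lemma path_props:
  "rtrancl_path (\<lambda>a b. a \<in> S \<and> b \<in> S \<and> E a b) x xs y \<Longrightarrow> x \<in> S \<Longrightarrow>
   set (x#xs) \<subseteq> S \<and> last (x#xs) = y \<and> (\<forall>i. Suc i < length (x#xs) \<longrightarrow> E ((x#xs)!i) ((x#xs)!Suc i))"
proof (induction rule: rtrancl_path.induct)
  case (base x) then show ?case by simp
next
  case (step x y ys z)
  then have IH: "set (y#ys) \<subseteq> S \<and> last (y#ys) = z \<and> (\<forall>i. Suc i < length (y#ys) \<longrightarrow> E ((y#ys)!i) ((y#ys)!Suc i))"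
    by simp
  show ?case
  proof (intro conjI allI impI)
    show "set (x#y#ys) \<subseteq> S" using IH step by auto
    show "last (x#y#ys) = z" using IH by simp
    fix i assume i: "Suc i < length (x#y#ys)"
    show "E ((x#y#ys)!i) ((x#y#ys)!Suc i)"
    proof (cases i)
      case 0 then show ?thesis using step by simp
    next
      case (Suc j) then show ?thesis using IH i by simp
    qed
  qed
qed

lemma sum_ind: "finite A \<Longrightarrow> (\<Sum>w\<in>A. if P w then 1 else 0) = (card {w\<in>A. P w} :: nat)"
proof -
  assume f: "finite A"
  have "card {w\<in>A. P w} = sum (\<lambda>_. 1::nat) {w\<in>A. P w}" by (rule card_eq_sum)
  also have "\<dots> = (\<Sum>w\<in>A. if P w then 1 else 0)" by (rule sum.inter_filter[OF f])
  finally show ?thesis by simp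
qed



lemma memsub: "a = b \<Longrightarrow> y \<in> S a \<Longrightarrow> P y \<Longrightarrow> y \<in> {z \<in> S b. P z}"
  by simp

theorem theorem2p1:
  fixes V :: "'a set" and E :: "'a \<Rightarrow> 'a \<Rightarrow> bool" and v :: 'a
  assumes "is_tree V E" and "v \<in> V"
    and "\<forall>u \<in> V - {v}. degree V E u \<le> 2"
  shows "(v \<in> diss_A V E \<longleftrightarrow> card (children_mod V E v 2) = 0 \<and> card (children_mod V E v 1) \<le> 1)
       \<and> (v \<in> diss_N V E \<longleftrightarrow> card (children_mod V E v 2) = 2
            \<or> card (children_mod V E v 1) + card (children_mod V E v 2) \<ge> 3)"
proof -
  have fin: "finite V" and Ein: "\<forall>u w. E u w \<longrightarrow> u \<in> V \<and> w \<in> V"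
    and sym: "\<forall>u w. E u w \<longrightarrow> E w u" and irr: "\<forall>u. \<not> E u u"
    and conn: "\<forall>x\<in>V. \<forall>y\<in>V. reach_in V E x y" and acyc: "\<nexists>cs. is_cycle V E cs"
    using assms(1) unfolding is_tree_def simple_graph_def connected_graph_def by auto
  define C where "C = children V E v"
  define K where "K = subtree_child V E v"
  define n where "n = (\<lambda>w. card (K w))"
  have C_def': "C = {w\<in>V. E v w}" by (simp add: C_def children_def)
  have K_def': "\<And>w. K w = {u\<in>V - {v}. reach_in (V-{v}) E w u}" by (simp add: K_def subtree_child_def)
  have finC: "finite C" using fin C_def' by simp
  have finK: "\<And>w. finite (K w)" using fin K_def' by simp
  have KV: "\<And>w. K w \<subseteq> V - {v}" using K_def' by auto
  have CV: "C \<subseteq> V - {v}" using C_def' irr by auto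
  have wK: "\<And>w. w \<in> C \<Longrightarrow> w \<in> K w"
  proof -
    fix w assume "w \<in> C"
    then have "w \<in> V - {v}" using CV by auto
    moreover have "reach_in (V-{v}) E w w" unfolding reach_in_def by simp
    ultimately show "w \<in> K w" using K_def' by simp
  qed
  have Kstep: "\<And>w u y. u \<in> K w \<Longrightarrow> y \<in> V - {v} \<Longrightarrow> E u y \<Longrightarrow> y \<in> K w"
  proof -
    fix w u y assume a: "u \<in> K w" "y \<in> V - {v}" "E u y"
    then have r: "reach_in (V-{v}) E w u" "u \<in> V - {v}" using K_def' by auto
    have "reach_in (V-{v}) E w y" using r a unfolding reach_in_def
      by (simp add: rtranclp.rtrancl_into_rtrancl)
    then show "y \<in> K w" using a K_def' by simp
  qed
  have disj: "\<And>w1 w2. w1 \<in> C \<Longrightarrow> w2 \<in> C \<Longrightarrow> w1 \<noteq> w2 \<Longrightarrow> K w1 \<inter> K w2 = {}"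
  proof (rule ccontr)
    fix w1 w2 assume a: "w1 \<in> C" "w2 \<in> C" "w1 \<noteq> w2" "K w1 \<inter> K w2 \<noteq> {}"
    then obtain u where u: "u \<in> K w1" "u \<in> K w2" by auto
    have r1: "reach_in (V-{v}) E w1 u" and r2: "reach_in (V-{v}) E w2 u" using u K_def' by auto
    have r2': "reach_in (V-{v}) E u w2" using reach_sym[OF sym r2] .
    have "reach_in (V-{v}) E w1 w2" using r1 r2' unfolding reach_in_def by (rule rtranclp_trans)
    then obtain xs0 where "rtrancl_path (\<lambda>a b. a \<in> V-{v} \<and> b \<in> V-{v} \<and> E a b) w1 xs0 w2"
      unfolding reach_in_def rtranclp_eq_rtrancl_path by blast
    then obtain xs where p: "rtrancl_path (\<lambda>a b. a \<in> V-{v} \<and> b \<in> V-{v} \<and> E a b) w1 xs w2"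
      and dxs: "distinct (w1#xs)" by (rule rtrancl_path_distinct)
    have w1S: "w1 \<in> V - {v}" using a(1) CV by auto
    have pp: "set (w1#xs) \<subseteq> V - {v} \<and> last (w1#xs) = w2 \<and> (\<forall>i. Suc i < length (w1#xs) \<longrightarrow> E ((w1#xs)!i) ((w1#xs)!Suc i))"
      using path_props[OF p w1S] .
    have xsne: "xs \<noteq> []"
    proof
      assume "xs = []"
      then have "last (w1#xs) = w1" by simp
      then show False using pp a(3) by simp
    qed
    define cs where "cs = v # w1 # xs"
    have "is_cycle V E cs" unfolding is_cycle_def
    proof (intro conjI allI impI)
      show "3 \<le> length cs" using xsne cs_def by (cases xs) auto
      have "v \<notin> set (w1#xs)" using pp by auto
      then show "distinct cs" using dxs cs_def by simp
      show "set cs \<subseteq> V" using pp cs_def assms(2) by auto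
      fix i assume i: "Suc i < length cs"
      show "E (cs!i) (cs!Suc i)"
      proof (cases i)
        case 0 then show ?thesis using cs_def a(1) C_def' by simp
      next
        case (Suc j) then show ?thesis using cs_def pp i by simp
      qed
    next
      have "last cs = w2" using cs_def pp by simp
      moreover have "E w2 v" using a(2) C_def' sym by auto
      ultimately show "E (last cs) (hd cs)" using cs_def by simp
    qed
    with acyc show False by blast
  qed
  have cover: "\<And>u. u \<in> V - {v} \<Longrightarrow> \<exists>w\<in>C. u \<in> K w"
  proof -
    fix u assume u: "u \<in> V - {v}"
    have "reach_in V E v u" using conn assms(2) u by auto
    then have "u \<noteq> v \<longrightarrow> (\<exists>w\<in>C. u \<in> K w)" unfolding reach_in_def
    proof (induction rule: rtranclp_induct)
      case base show ?case by simp
    next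
      case (step y z)
      show ?case
      proof
        assume zv: "z \<noteq> v"
        show "\<exists>w\<in>C. z \<in> K w"
        proof (cases "y = v")
          case True
          then have "z \<in> C" using step.hyps(2) C_def' by auto
          then show ?thesis using wK by blast
        next
          case False
          then obtain w where w: "w \<in> C" "y \<in> K w" using step.IH by blast
          have "z \<in> K w" using Kstep[OF w(2)] step.hyps(2) zv by auto
          then show ?thesis using w(1) by blast
        qed
      qed
    qed
    then show "\<exists>w\<in>C. u \<in> K w" using u by auto
  qed
  have vadj: "\<And>w u. w \<in> C \<Longrightarrow> u \<in> K w \<Longrightarrow> E u v \<Longrightarrow> u = w"
  proof (rule ccontr)
    fix w u assume a: "w \<in> C" "u \<in> K w" "E u v" "u \<noteq> w"
    have "u \<in> C" using a(2,3) KV sym C_def' by auto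
    then have "u \<in> K u" by (rule wK)
    then show False using disj[OF a(1) \<open>u \<in> C\<close>] a(2) a(4) by auto
  qed
  have edgeK: "\<And>w u y. u \<in> K w \<Longrightarrow> E u y \<Longrightarrow> y \<noteq> v \<Longrightarrow> y \<in> K w"
    using Kstep Ein by blast
  have legs: "\<And>w. w \<in> C \<Longrightarrow> legP E (K w) w (n w)"
  proof -
    fix w assume w: "w \<in> C"
    show "legP E (K w) w (n w)"
    proof (rule leg[OF sym irr])
      show "finite (K w)" by (rule finK)
      show "card (K w) = n w" by (simp add: n_def)
      show "w \<in> K w" using wK[OF w] .
      show "\<forall>x\<in>K w. reach_in (K w) E w x"
      proof
        fix x assume "x \<in> K w"
        then have "reach_in (V-{v}) E w x" using K_def' by auto
        then show "reach_in (K w) E w x" unfolding reach_in_def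
        proof (induction rule: rtranclp_induct)
          case base show ?case by simp
        next
          case (step y z)
          have yK: "y \<in> K w" using step.hyps(1) step.hyps(2) K_def' unfolding reach_in_def by auto
          have zK: "z \<in> K w" using Kstep[OF yK] step.hyps(2) by auto
          show ?case using step.IH yK zK step.hyps(2) by (simp add: rtranclp.rtrancl_into_rtrancl)
        qed
      qed
      show "\<forall>u\<in>K w. card {y\<in>K w. E u y} \<le> 2"
      proof
        fix u assume u: "u \<in> K w"
        have "card {y\<in>K w. E u y} \<le> card {y\<in>V. E u y}" using fin KV by (intro card_mono) auto
        also have "\<dots> \<le> 2" using assms(3) u KV unfolding degree_def by blast
        finally show "card {y\<in>K w. E u y} \<le> 2" .
      qed
      show "card {y\<in>K w. E w y} \<le> 1"
      proof -
        have "{y\<in>K w. E w y} \<subseteq> {y\<in>V. E w y} - {v}" using KV by auto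
        then have "card {y\<in>K w. E w y} \<le> card ({y\<in>V. E w y} - {v})" using fin by (intro card_mono) auto
        also have "\<dots> = card {y\<in>V. E w y} - 1"
          using w C_def' sym assms(2) fin by (subst card_Diff_singleton) auto
        also have "\<dots> \<le> 1"
        proof -
          have "w \<in> V - {v}" using w CV by auto
          then have "card {y\<in>V. E w y} \<le> 2" using assms(3) unfolding degree_def by blast
          then show ?thesis by simp
        qed
        finally show ?thesis .
      qed
    qed
  qed

  define CM where "CM = children_mod V E v"
  have CM_eq: "\<And>i. CM i = {w\<in>C. n w mod 3 = i}"
    by (simp add: CM_def children_mod_def C_def n_def K_def)
  define c1 where "c1 = card (CM 1)"
  define c2 where "c2 = card (CM 2)"
  define Q where "Q = card {w\<in>C. n w mod 3 \<noteq> 0}"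
  have mod3: "\<And>x::nat. x mod 3 = 0 \<or> x mod 3 = 1 \<or> x mod 3 = 2" by presburger
  have finCM: "\<And>i. finite (CM i)" using CM_eq finC by simp
  have Qc: "Q = c1 + c2"
  proof -
    have "{w\<in>C. n w mod 3 \<noteq> 0} = CM 1 \<union> CM 2" using CM_eq mod3 by auto
    moreover have "CM 1 \<inter> CM 2 = {}" using CM_eq by auto
    ultimately show ?thesis unfolding Q_def c1_def c2_def using finCM card_Un_disjoint by metis
  qed
  define L where "L = (\<lambda>w. if n w mod 3 \<noteq> 0 then 1 else (0::nat))"
  have sumL: "(\<Sum>w\<in>C. L w) = Q" using sum_ind[OF finC] unfolding L_def Q_def by simp
  define M0 where "M0 = (\<Sum>w\<in>C. fd (n w))"
  define P where "P = (if c1 = 0 then 1 else (2::nat))"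
  have npos: "\<And>w. w \<in> C \<Longrightarrow> n w \<ge> 1"
  proof -
    fix w assume "w \<in> C"
    then have "K w \<noteq> {}" using wK by blast
    then have "card (K w) > 0" using finK card_gt_0_iff by blast
    then show "n w \<ge> 1" by (simp add: n_def)
  qed
  have cardU: "\<And>G. \<forall>w\<in>C. G w \<subseteq> K w \<Longrightarrow> card (\<Union>w\<in>C. G w) = (\<Sum>w\<in>C. card (G w))"
  proof -
    fix G assume a: "\<forall>w\<in>C. G w \<subseteq> K w"
    have f: "\<forall>w\<in>C. finite (G w)" using a finK finite_subset by blast
    have d: "\<forall>i\<in>C. \<forall>j\<in>C. i \<noteq> j \<longrightarrow> G i \<inter> G j = {}" using a disj by blast
    show "card (\<Union>w\<in>C. G w) = (\<Sum>w\<in>C. card (G w))" using card_UN_disjoint[OF finC f d] .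
  qed
  have dissdss: "\<And>F. dissociation_set V E F \<Longrightarrow> dss E F"
    unfolding dissociation_set_def dss_def using fin finite_subset by blast
  have dssdiss: "\<And>F. F \<subseteq> V \<Longrightarrow> dss E F \<Longrightarrow> dissociation_set V E F"
    unfolding dissociation_set_def dss_def by blast
  have decomp: "\<And>F. F \<subseteq> V \<Longrightarrow> F - {v} = (\<Union>w\<in>C. F \<inter> K w)"
  proof -
    fix F assume FV: "F \<subseteq> V"
    show "F - {v} = (\<Union>w\<in>C. F \<inter> K w)"
    proof
      show "F - {v} \<subseteq> (\<Union>w\<in>C. F \<inter> K w)" using cover FV by blast
      show "(\<Union>w\<in>C. F \<inter> K w) \<subseteq> F - {v}" using KV by blast
    qed
  qed
  have UA: "\<And>w S. w \<in> C \<Longrightarrow> S \<subseteq> K w \<Longrightarrow> dss E S \<Longrightarrow> card S \<le> fd (n w)"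
  proof -
    fix w S assume w: "w \<in> C" and S: "S \<subseteq> K w" "dss E S"
    have "\<forall>S. S \<subseteq> K w \<longrightarrow> dss E S \<longrightarrow> card S \<le> fd (n w)"
      using legs[OF w] unfolding legP_def by (elim conjE) assumption
    then show "card S \<le> fd (n w)" using S by blast
  qed
  have UB: "\<And>w S. w \<in> C \<Longrightarrow> S \<subseteq> K w \<Longrightarrow> dss E S \<Longrightarrow> w \<notin> S \<Longrightarrow> card S \<le> fd (n w - 1)"
  proof -
    fix w S assume w: "w \<in> C" and S: "S \<subseteq> K w" "dss E S" "w \<notin> S"
    have "\<forall>S. S \<subseteq> K w \<longrightarrow> dss E S \<longrightarrow> w \<notin> S \<longrightarrow> card S \<le> fd (n w - 1)"
      using legs[OF w] unfolding legP_def by (elim conjE) assumption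
    then show "card S \<le> fd (n w - 1)" using S by blast
  qed
  have UC: "\<And>w S. w \<in> C \<Longrightarrow> S \<subseteq> K w \<Longrightarrow> dss E S \<Longrightarrow> w \<in> S \<Longrightarrow> (\<forall>y\<in>S. \<not> E w y) \<Longrightarrow> card S \<le> 1 + fd (n w - 2)"
  proof -
    fix w S assume w: "w \<in> C" and S: "S \<subseteq> K w" "dss E S" "w \<in> S" "\<forall>y\<in>S. \<not> E w y"
    have "\<forall>S. S \<subseteq> K w \<longrightarrow> dss E S \<longrightarrow> w \<in> S \<longrightarrow> (\<forall>y\<in>S. \<not> E w y) \<longrightarrow> card S \<le> 1 + fd (n w - 2)"
      using legs[OF w] unfolding legP_def by (elim conjE) assumption
    then show "card S \<le> 1 + fd (n w - 2)" using S by blast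
  qed
  have WA: "\<forall>w\<in>C. \<exists>S. S \<subseteq> K w \<and> dss E S \<and> card S = fd (n w)"
  proof
    fix w assume w: "w \<in> C"
    show "\<exists>S. S \<subseteq> K w \<and> dss E S \<and> card S = fd (n w)"
      using legs[OF w] unfolding legP_def by (elim conjE) assumption
  qed
  have WB: "\<forall>w\<in>C. \<exists>S. S \<subseteq> K w \<and> dss E S \<and> w \<notin> S \<and> card S = fd (n w - 1)"
  proof
    fix w assume w: "w \<in> C"
    show "\<exists>S. S \<subseteq> K w \<and> dss E S \<and> w \<notin> S \<and> card S = fd (n w - 1)"
      using legs[OF w] unfolding legP_def by (elim conjE) assumption
  qed
  have WC: "\<forall>w\<in>C. \<exists>S. S \<subseteq> K w \<and> dss E S \<and> w \<in> S \<and> (\<forall>y\<in>S. \<not> E w y) \<and> card S = 1 + fd (n w - 2)"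
  proof
    fix w assume w: "w \<in> C"
    show "\<exists>S. S \<subseteq> K w \<and> dss E S \<and> w \<in> S \<and> (\<forall>y\<in>S. \<not> E w y) \<and> card S = 1 + fd (n w - 2)"
      using legs[OF w] unfolding legP_def by (elim conjE) assumption
  qed
  have U0: "\<And>F. dissociation_set V E F \<Longrightarrow> v \<notin> F \<Longrightarrow> card F \<le> M0"
  proof -
    fix F assume F: "dissociation_set V E F" "v \<notin> F"
    have FV: "F \<subseteq> V" using F(1) unfolding dissociation_set_def by blast
    have dF: "dss E F" using dissdss[OF F(1)] .
    have "F = F - {v}" using F(2) by simp
    also have "\<dots> = (\<Union>w\<in>C. F \<inter> K w)" using decomp[OF FV] .
    finally have "card F = card (\<Union>w\<in>C. F \<inter> K w)" by simp
    also have "\<dots> = (\<Sum>w\<in>C. card (F \<inter> K w))" by (rule cardU) blast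
    also have "\<dots> \<le> (\<Sum>w\<in>C. fd (n w))"
    proof (rule sum_mono)
      fix w assume w: "w \<in> C"
      have "dss E (F \<inter> K w)" using dss_subset[OF dF] by blast
      then show "card (F \<inter> K w) \<le> fd (n w)" using UA[OF w] by blast
    qed
    finally show "card F \<le> M0" unfolding M0_def .
  qed
  have Uv: "\<And>F. dissociation_set V E F \<Longrightarrow> v \<in> F \<Longrightarrow> card F + Q \<le> M0 + P"
  proof -
    fix F assume F: "dissociation_set V E F" "v \<in> F"
    have FV: "F \<subseteq> V" using F(1) unfolding dissociation_set_def by blast
    have dF: "dss E F" using dissdss[OF F(1)] .
    have finF: "finite F" using FV fin finite_subset by blast
    define X where "X = (\<lambda>w. if w \<in> F \<and> n w mod 3 = 1 then 1 else (0::nat))"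
    have per: "\<And>w. w \<in> C \<Longrightarrow> card (F \<inter> K w) + L w \<le> fd (n w) + X w"
    proof -
      fix w assume w: "w \<in> C"
      have d: "dss E (F \<inter> K w)" using dss_subset[OF dF] by blast
      show "card (F \<inter> K w) + L w \<le> fd (n w) + X w"
      proof (cases "w \<in> F")
        case True
        have nb: "\<forall>y\<in>F \<inter> K w. \<not> E w y"
        proof (intro ballI notI)
          fix y assume y: "y \<in> F \<inter> K w" "E w y"
          have "card {z\<in>F. E w z} \<le> 1" using F(1) True unfolding dissociation_set_def by blast
          moreover have "v \<in> {z\<in>F. E w z}" using F(2) w C_def' sym by auto
          moreover have "y \<in> {z\<in>F. E w z}" using y by auto
          moreover have "finite {z\<in>F. E w z}" using finF by simp
          ultimately have "y = v" using card_le_Suc0_iff_eq[of "{z\<in>F. E w z}"] by auto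
          then show False using y KV by auto
        qed
        have "card (F \<inter> K w) \<le> 1 + fd (n w - 2)" using UC[OF w _ d] True wK[OF w] nb by blast
        then show ?thesis using ar_c[OF npos[OF w]] True unfolding L_def X_def by auto
      next
        case False
        have "card (F \<inter> K w) \<le> fd (n w - 1)" using UB[OF w _ d] False by blast
        then show ?thesis using ar_b[OF npos[OF w]] False unfolding L_def X_def by auto
      qed
    qed
    have Z: "(\<Sum>w\<in>C. X w) \<le> (if c1 = 0 then 0 else 1)"
    proof -
      have s: "(\<Sum>w\<in>C. X w) = card {w\<in>C. w \<in> F \<and> n w mod 3 = 1}"
        using sum_ind[OF finC] unfolding X_def by simp
      have sub1: "{w\<in>C. w \<in> F \<and> n w mod 3 = 1} \<subseteq> {y\<in>F. E v y}" using C_def' by auto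
      have "card {y\<in>F. E v y} \<le> 1" using F unfolding dissociation_set_def by blast
      moreover have "card {w\<in>C. w \<in> F \<and> n w mod 3 = 1} \<le> card {y\<in>F. E v y}"
        using card_mono[OF _ sub1] finF by simp
      ultimately have le1: "card {w\<in>C. w \<in> F \<and> n w mod 3 = 1} \<le> 1" by simp
      have sub2: "{w\<in>C. w \<in> F \<and> n w mod 3 = 1} \<subseteq> CM 1" using CM_eq by auto
      have le2: "card {w\<in>C. w \<in> F \<and> n w mod 3 = 1} \<le> c1"
        unfolding c1_def using card_mono[OF finCM sub2] .
      show ?thesis using s le1 le2 by auto
    qed
    have cF: "card F = Suc (card (F - {v}))" using card.remove[OF finF F(2)] .
    have "card (F - {v}) = card (\<Union>w\<in>C. F \<inter> K w)" using decomp[OF FV] by simp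
    also have "\<dots> = (\<Sum>w\<in>C. card (F \<inter> K w))" by (rule cardU) blast
    finally have cF2: "card (F - {v}) = (\<Sum>w\<in>C. card (F \<inter> K w))" .
    have "(\<Sum>w\<in>C. card (F \<inter> K w)) + Q = (\<Sum>w\<in>C. card (F \<inter> K w) + L w)"
      using sumL by (simp add: sum.distrib)
    also have "\<dots> \<le> (\<Sum>w\<in>C. fd (n w) + X w)" using per by (rule sum_mono)
    also have "\<dots> = M0 + (\<Sum>w\<in>C. X w)" unfolding M0_def by (simp add: sum.distrib)
    finally have "(\<Sum>w\<in>C. card (F \<inter> K w)) + Q \<le> M0 + (\<Sum>w\<in>C. X w)" .
    then show "card F + Q \<le> M0 + P" using cF cF2 Z unfolding P_def by auto
  qed
  obtain SA where SA: "\<forall>w\<in>C. SA w \<subseteq> K w \<and> dss E (SA w) \<and> card (SA w) = fd (n w)"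
    using bchoice[OF WA] by (elim exE) assumption
  obtain SB where SB: "\<forall>w\<in>C. SB w \<subseteq> K w \<and> dss E (SB w) \<and> w \<notin> SB w \<and> card (SB w) = fd (n w - 1)"
    using bchoice[OF WB] by (elim exE) assumption
  obtain SC where SC: "\<forall>w\<in>C. SC w \<subseteq> K w \<and> dss E (SC w) \<and> w \<in> SC w \<and> (\<forall>y\<in>SC w. \<not> E w y) \<and> card (SC w) = 1 + fd (n w - 2)"
    using bchoice[OF WC] by (elim exE) assumption
  have SA1: "\<And>w. w \<in> C \<Longrightarrow> SA w \<subseteq> K w" and SA2: "\<And>w. w \<in> C \<Longrightarrow> dss E (SA w)"
    and SA3: "\<And>w. w \<in> C \<Longrightarrow> card (SA w) = fd (n w)" using SA by auto
  have SB1: "\<And>w. w \<in> C \<Longrightarrow> SB w \<subseteq> K w" and SB2: "\<And>w. w \<in> C \<Longrightarrow> dss E (SB w)"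
    and SB3: "\<And>w. w \<in> C \<Longrightarrow> w \<notin> SB w" and SB4: "\<And>w. w \<in> C \<Longrightarrow> card (SB w) = fd (n w - 1)" using SB by auto
  have SC1: "\<And>w. w \<in> C \<Longrightarrow> SC w \<subseteq> K w" and SC2: "\<And>w. w \<in> C \<Longrightarrow> dss E (SC w)"
    and SC3: "\<And>w. w \<in> C \<Longrightarrow> w \<in> SC w" and SC4: "\<And>w. w \<in> C \<Longrightarrow> \<forall>y\<in>SC w. \<not> E w y"
    and SC5: "\<And>w. w \<in> C \<Longrightarrow> card (SC w) = 1 + fd (n w - 2)" using SC by auto
  define F0 where "F0 = (\<Union>w\<in>C. SA w)"
  have F0V: "F0 \<subseteq> V" using SA1 KV unfolding F0_def by blast
  have finF0: "finite F0" using F0V fin finite_subset by blast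
  have vF0: "v \<notin> F0" using SA1 KV unfolding F0_def by blast
  have F0d: "dissociation_set V E F0"
  proof (rule dssdiss[OF F0V])
    show "dss E F0" unfolding dss_def
    proof (intro conjI ballI)
      show "finite F0" by (rule finF0)
      fix x assume "x \<in> F0"
      then obtain w where w: "w \<in> C" "x \<in> SA w" unfolding F0_def by blast
      have sub: "{y\<in>F0. E x y} \<subseteq> {y\<in>SA w. E x y}"
      proof
        fix y assume y: "y \<in> {y\<in>F0. E x y}"
        then have "y \<in> (\<Union>w\<in>C. SA w)" unfolding F0_def by simp
        then obtain w2 where w2: "w2 \<in> C" "y \<in> SA w2" by (rule UN_E)
        have yK2: "y \<in> K w2" using SA1[OF w2(1)] w2(2) by (rule subsetD)
        have yv: "y \<noteq> v" using KV[of w2] yK2 by blast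
        have xK: "x \<in> K w" using SA1[OF w(1)] w(2) by (rule subsetD)
        have "E x y" using y by simp
        then have "y \<in> K w" using edgeK[OF xK _ yv] by simp
        then have "w2 = w"
        proof (rule contrapos_pp)
          assume "w2 \<noteq> w"
          then have "K w2 \<inter> K w = {}" by (rule disj[OF w2(1) w(1)])
          then show "y \<notin> K w" using yK2 by blast
        qed
        then show "y \<in> {y\<in>SA w. E x y}" using w2(2) \<open>E x y\<close> by (rule memsub)
      qed
      have "{y\<in>SA w. E x y} \<subseteq> K w" using SA1[OF w(1)] by blast
      then have fin2: "finite {y\<in>SA w. E x y}" using finK[of w] by (rule finite_subset)
      have "\<forall>x\<in>SA w. card {y\<in>SA w. E x y} \<le> 1" using SA2[OF w(1)] by (simp add: dss_def)
      then have "card {y\<in>SA w. E x y} \<le> 1" using w(2) by blast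
      then show "card {y\<in>F0. E x y} \<le> 1" using card_mono[OF fin2 sub] by simp
    qed
  qed
  have cF0: "card F0 = M0"
  proof -
    have "card F0 = (\<Sum>w\<in>C. card (SA w))" unfolding F0_def by (rule cardU) (use SA1 in blast)
    also have "\<dots> = M0" unfolding M0_def using SA3 by (intro sum.cong) auto
    finally show ?thesis .
  qed
  obtain Z0 where Z0: "Z0 \<subseteq> CM 1" "card Z0 = (if c1 = 0 then 0 else 1)"
  proof (cases "c1 = 0")
    case True
    then show ?thesis using that[of "{}"] by simp
  next
    case False
    then have "CM 1 \<noteq> {}" unfolding c1_def by auto
    then obtain w0 where "w0 \<in> CM 1" by blast
    then show ?thesis using that[of "{w0}"] False by simp
  qed
  have Z0C: "Z0 \<subseteq> C" using Z0(1) CM_eq by auto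
  have Z0m: "\<And>w. w \<in> Z0 \<Longrightarrow> n w mod 3 = 1" using Z0(1) CM_eq by auto
  have finZ0: "finite Z0" using Z0C finC finite_subset by blast
  define G where "G = (\<lambda>w. if w \<in> Z0 then SC w else SB w)"
  have GK: "\<forall>w\<in>C. G w \<subseteq> K w" using SB1 SC1 unfolding G_def by simp
  have Gd: "\<And>w. w \<in> C \<Longrightarrow> dss E (G w)" using SB2 SC2 unfolding G_def by simp
  have Gw: "\<And>w. w \<in> C \<Longrightarrow> w \<in> G w \<Longrightarrow> w \<in> Z0 \<and> G w = SC w"
  proof -
    fix w assume w: "w \<in> C" "w \<in> G w"
    show "w \<in> Z0 \<and> G w = SC w"
    proof (cases "w \<in> Z0")
      case True then show ?thesis unfolding G_def by simp
    next
      case False then have "G w = SB w" unfolding G_def by simp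
      then show ?thesis using SB3[OF w(1)] w(2) by simp
    qed
  qed
  define Fv where "Fv = insert v (\<Union>w\<in>C. G w)"
  have UGV: "(\<Union>w\<in>C. G w) \<subseteq> V - {v}" using GK KV by blast
  have FvV: "Fv \<subseteq> V" using UGV assms(2) unfolding Fv_def by blast
  have finFv: "finite Fv" using FvV fin finite_subset by blast
  have other: "\<And>w x y. w \<in> C \<Longrightarrow> x \<in> G w \<Longrightarrow> y \<in> Fv \<Longrightarrow> E x y \<Longrightarrow> y \<noteq> v \<Longrightarrow> y \<in> G w"
  proof -
    fix w x y assume a: "w \<in> C" "x \<in> G w" "y \<in> Fv" "E x y" "y \<noteq> v"
    then obtain w2 where w2: "w2 \<in> C" "y \<in> G w2" unfolding Fv_def by blast
    have yK2: "y \<in> K w2" using w2 GK by blast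
    have "y \<in> K w" using edgeK[of x w y] a GK by blast
    then have "w2 = w" using disj[OF w2(1) a(1)] yK2 by blast
    then show "y \<in> G w" using w2(2) by (rule subst)
  qed
  have Fvd: "dissociation_set V E Fv"
  proof (rule dssdiss[OF FvV])
    show "dss E Fv" unfolding dss_def
    proof (intro conjI ballI)
      show "finite Fv" by (rule finFv)
      fix x assume x: "x \<in> Fv"
      show "card {y\<in>Fv. E x y} \<le> 1"
      proof (cases "x = v")
        case True
        have "{y\<in>Fv. E x y} \<subseteq> Z0"
        proof
          fix y assume y: "y \<in> {y\<in>Fv. E x y}"
          then have "y \<noteq> v" using True irr by auto
          then obtain w2 where w2: "w2 \<in> C" "y \<in> G w2" using y unfolding Fv_def by blast
          have "E y v" using y True sym by auto
          then have "y = w2" using vadj[OF w2(1)] w2 GK by blast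
          then show "y \<in> Z0" using Gw[OF w2(1)] w2 by blast
        qed
        then have "card {y\<in>Fv. E x y} \<le> card Z0" using card_mono[OF finZ0] by blast
        then show ?thesis using Z0(2) by (simp split: if_splits)
      next
        case False
        then obtain w where w: "w \<in> C" "x \<in> G w" using x unfolding Fv_def by blast
        show ?thesis
        proof (cases "x = w")
          case True
          have GS: "w \<in> Z0 \<and> G w = SC w" using Gw[OF w(1)] w(2) True by blast
          have "{y\<in>Fv. E x y} \<subseteq> {v}"
          proof
            fix y assume y: "y \<in> {y\<in>Fv. E x y}"
            show "y \<in> {v}"
            proof (rule ccontr)
              assume "y \<notin> {v}"
              then have "y \<in> G w" using other[OF w] y by blast
              then have "y \<in> SC w" using GS by simp
              moreover have "E w y" using y True by simp
              ultimately show False using SC4[OF w(1)] by blast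
            qed
          qed
          then show ?thesis by (rule card_sub1)
        next
          case False
          have sub: "{y\<in>Fv. E x y} \<subseteq> {y\<in>G w. E x y}"
          proof
            fix y assume y: "y \<in> {y\<in>Fv. E x y}"
            have "y \<noteq> v"
            proof
              assume "y = v"
              then have "E x v" using y by simp
              then have "x = w" using vadj[OF w(1)] w(2) GK w(1) by blast
              then show False using False by simp
            qed
            then show "y \<in> {y\<in>G w. E x y}" using other[OF w] y by blast
          qed
          have "{y\<in>G w. E x y} \<subseteq> K w" using GK w(1) by blast
          then have fin2: "finite {y\<in>G w. E x y}" using finK[of w] by (rule finite_subset)
          have "\<forall>x\<in>G w. card {y\<in>G w. E x y} \<le> 1" using Gd[OF w(1)] by (simp add: dss_def)
          then have "card {y\<in>G w. E x y} \<le> 1" using w(2) by blast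
          then show ?thesis using card_mono[OF fin2 sub] by simp
        qed
      qed
    qed
  qed
  have vFv: "v \<in> Fv" unfolding Fv_def by simp
  have cFv: "card Fv + Q = M0 + P"
  proof -
    have "v \<notin> (\<Union>w\<in>C. G w)" using UGV by blast
    moreover have "finite (\<Union>w\<in>C. G w)" using UGV fin finite_subset by blast
    ultimately have c1': "card Fv = Suc (card (\<Union>w\<in>C. G w))" unfolding Fv_def by simp
    have c2': "card (\<Union>w\<in>C. G w) = (\<Sum>w\<in>C. card (G w))" by (rule cardU[OF GK])
    have per: "\<And>w. w \<in> C \<Longrightarrow> card (G w) + L w = fd (n w) + (if w \<in> Z0 then 1 else 0)"
    proof -
      fix w assume w: "w \<in> C"
      show "card (G w) + L w = fd (n w) + (if w \<in> Z0 then 1 else 0)"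
      proof (cases "w \<in> Z0")
        case True
        then have "card (G w) = 1 + fd (n w - 2)" using SC5[OF w] unfolding G_def by simp
        then show ?thesis using ar_c[OF npos[OF w]] Z0m[OF True] True unfolding L_def by simp
      next
        case False
        then have "card (G w) = fd (n w - 1)" using SB4[OF w] unfolding G_def by simp
        then show ?thesis using ar_b[OF npos[OF w]] False unfolding L_def by simp
      qed
    qed
    have "(\<Sum>w\<in>C. card (G w)) + Q = (\<Sum>w\<in>C. card (G w) + L w)"
      using sumL by (simp add: sum.distrib)
    also have "\<dots> = (\<Sum>w\<in>C. fd (n w) + (if w \<in> Z0 then 1 else 0))" using per by (rule sum.cong[OF refl])
    also have "\<dots> = M0 + (\<Sum>w\<in>C. (if w \<in> Z0 then 1 else 0))" unfolding M0_def by (simp add: sum.distrib)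
    also have "(\<Sum>w\<in>C. (if w \<in> Z0 then 1 else (0::nat))) = card {w\<in>C. w \<in> Z0}" by (rule sum_ind[OF finC])
    also have "{w\<in>C. w \<in> Z0} = Z0" using Z0C by blast
    finally have "(\<Sum>w\<in>C. card (G w)) + Q = M0 + card Z0" .
    then show ?thesis using c1' c2' Z0(2) unfolding P_def by auto
  qed
  have hA: "v \<in> diss_A V E \<longleftrightarrow> Q < P"
  proof
    assume vA: "v \<in> diss_A V E"
    show "Q < P"
    proof (rule ccontr)
      assume "\<not> Q < P"
      have "max_dissociation_set V E F0" unfolding max_dissociation_set_def
      proof (intro conjI allI impI)
        show "dissociation_set V E F0" by (rule F0d)
        fix F' assume F': "dissociation_set V E F'"
        show "card F' \<le> card F0"
        proof (cases "v \<in> F'")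
          case True then show ?thesis using Uv[OF F' True] \<open>\<not> Q < P\<close> cF0 by simp
        next
          case False then show ?thesis using U0[OF F' False] cF0 by simp
        qed
      qed
      then show False using vA vF0 unfolding diss_A_def by blast
    qed
  next
    assume QP: "Q < P"
    show "v \<in> diss_A V E" unfolding diss_A_def
    proof (intro CollectI conjI allI impI)
      show "v \<in> V" by (rule assms(2))
      fix F assume F: "max_dissociation_set V E F"
      show "v \<in> F"
      proof (rule ccontr)
        assume "v \<notin> F"
        then have "card F \<le> M0" using U0 F unfolding max_dissociation_set_def by blast
        moreover have "card Fv \<le> card F" using F Fvd unfolding max_dissociation_set_def by blast
        ultimately show False using cFv QP by simp
      qed
    qed
  qed
  have hN: "v \<in> diss_N V E \<longleftrightarrow> P < Q"
  proof
    assume vN: "v \<in> diss_N V E"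
    show "P < Q"
    proof (rule ccontr)
      assume "\<not> P < Q"
      have "max_dissociation_set V E Fv" unfolding max_dissociation_set_def
      proof (intro conjI allI impI)
        show "dissociation_set V E Fv" by (rule Fvd)
        fix F' assume F': "dissociation_set V E F'"
        show "card F' \<le> card Fv"
        proof (cases "v \<in> F'")
          case True then show ?thesis using Uv[OF F' True] cFv by simp
        next
          case False then show ?thesis using U0[OF F' False] cFv \<open>\<not> P < Q\<close> by simp
        qed
      qed
      then show False using vN vFv unfolding diss_N_def by blast
    qed
  next
    assume PQ: "P < Q"
    show "v \<in> diss_N V E" unfolding diss_N_def
    proof (intro CollectI conjI allI impI)
      show "v \<in> V" by (rule assms(2))
      fix F assume F: "max_dissociation_set V E F"
      show "v \<notin> F"
      proof
        assume "v \<in> F"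
        then have "card F + Q \<le> M0 + P" using Uv F unfolding max_dissociation_set_def by blast
        moreover have "card F0 \<le> card F" using F F0d unfolding max_dissociation_set_def by blast
        ultimately show False using cF0 PQ by simp
      qed
    qed
  qed
  have e1: "card (children_mod V E v 1) = c1" "card (children_mod V E v 2) = c2"
    unfolding c1_def c2_def CM_def by simp_all
  show ?thesis unfolding e1 using hA hN Qc unfolding P_def by auto
qed

end
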